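(* Let $\mathcal{G}=(\mathcal{N},\mathcal{E})$ be a connected meshed graph (containing at least one cycle) with $N$ nodes and $E$ edges, and let $A\in\mathbb{R}^{E\times N}$ be its edge-node incidence matrix. Let $f\in\mathbb{R}^E$. Then there exist $x\in\mathbb{R}^E$ with $x>\mathbf{0}$ (entrywise) and $\theta\in\mathbb{R}^N$ such that $$\operatorname{diag}(f)\,x=A\theta$$ if and only if for every $n\in\operatorname{null}(A^\top)$ one of the following holds: (1) $f\odot n=\mathbf{0}$; or (2) there exist indices $i,j$ such that $(f\odot n)_i>0$ and $(f\odot n)_j<0$.
   Context: Incidence matrix: after assigning an arbitrary direction $e=(m,n)$ to each edge, $A_{e,k}=+1$ if $k=m$, $A_{e,k}=-1$ if $k=n$, and $A_{e,k}=0$ otherwise. $\odot$ denotes the entrywise product of vectors, and $\operatorname{diag}(v)$ the diagonal matrix with diagonal $v$. $\operatorname{null}(A^\top)=\{n\in\mathbb{R}^E: A^\top n=\mathbf{0}\}$. *)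

theory Defs
  imports "HOL-Analysis.Analysis"
begin

text \<open>A finite directed graph with node type 'n and edge type 'e; every edge e is
  oriented from src e to tgt e (the arbitrary orientation used for the incidence matrix).\<close>

definition adjacent :: "('e \<Rightarrow> 'n) \<Rightarrow> ('e \<Rightarrow> 'n) \<Rightarrow> 'n \<Rightarrow> 'n \<Rightarrow> bool" where
  "adjacent src tgt u v \<longleftrightarrow> (\<exists>e. (src e = u \<and> tgt e = v) \<or> (src e = v \<and> tgt e = u))"

definition simple_graph :: "('e \<Rightarrow> 'n) \<Rightarrow> ('e \<Rightarrow> 'n) \<Rightarrow> bool" where
  "simple_graph src tgt \<longleftrightarrow> (\<forall>e. src e \<noteq> tgt e) \<and>
     (\<forall>e e'. {src e, tgt e} = {src e', tgt e'} \<longrightarrow> e = e')"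

definition connected_graph :: "('e \<Rightarrow> 'n) \<Rightarrow> ('e \<Rightarrow> 'n) \<Rightarrow> bool" where
  "connected_graph src tgt \<longleftrightarrow> (\<forall>u v. (adjacent src tgt)\<^sup>*\<^sup>* u v)"

definition has_cycle :: "('e \<Rightarrow> 'n) \<Rightarrow> ('e \<Rightarrow> 'n) \<Rightarrow> bool" where
  "has_cycle src tgt \<longleftrightarrow> (\<exists>vs. length vs \<ge> 3 \<and> distinct vs \<and>
     (\<forall>i < length vs. adjacent src tgt (vs ! i) (vs ! ((i + 1) mod length vs))))"

definition incidence_matrix :: "('e::finite \<Rightarrow> 'n::finite) \<Rightarrow> ('e \<Rightarrow> 'n) \<Rightarrow> real^'n^'e" where
  "incidence_matrix src tgt = (\<chi> e k. if k = src e then 1 else if k = tgt e then -1 else 0)"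

definition diag_mat :: "real^'e \<Rightarrow> real^'e^'e" where
  "diag_mat v = (\<chi> i j. if i = j then v $ i else 0)"

end

theory Submission
  imports Defs
begin

lemma easy_dir:
  fixes x w :: "real^'e::finite"
  assumes pos: "\<forall>e. x $ e > 0" and orth: "w \<bullet> x = 0"
  shows "w = 0 \<or> (\<exists>i j. w $ i > 0 \<and> w $ j < 0)"
proof (rule ccontr)
  assume H: "\<not> ?thesis"
  hence nz: "w \<noteq> 0" and ns: "(\<forall>i. w $ i \<ge> 0) \<or> (\<forall>i. w $ i \<le> 0)"
    by (auto simp: not_less)
  from nz obtain k where k: "w $ k \<noteq> 0" by (metis vec_eq_iff zero_index)
  have s: "(\<Sum>i\<in>UNIV. w $ i * x $ i) = 0" using orth by (simp add: inner_vec_def)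
  from ns show False
  proof
    assume a: "\<forall>i. w $ i \<ge> 0"
    have "\<forall>i\<in>UNIV. w $ i * x $ i = 0"
      using sum_nonneg_eq_0_iff[of UNIV "\<lambda>i. w $ i * x $ i"] s a pos
      by (simp add: less_imp_le)
    then show False using k pos by (metis UNIV_I less_irrefl mult_eq_0_iff)
  next
    assume a: "\<forall>i. w $ i \<le> 0"
    have s2: "(\<Sum>i\<in>UNIV. - (w $ i * x $ i)) = 0" using s by (simp add: sum_negf)
    have "\<forall>i\<in>UNIV. - (w $ i * x $ i) = 0"
      using sum_nonneg_eq_0_iff[of UNIV "\<lambda>i. - (w $ i * x $ i)"] s2 a pos
      by (simp add: less_imp_le mult_nonpos_nonneg)
    then show False using k pos by (metis UNIV_I less_irrefl mult_eq_0_iff neg_equal_0_iff_equal)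
  qed
qed

lemma range_char:
  fixes A :: "real^'n::finite^'e::finite" and y :: "real^'e"
  assumes "\<And>n. transpose A *v n = 0 \<Longrightarrow> y \<bullet> n = 0"
  shows "\<exists>\<theta>. y = A *v \<theta>"
proof -
  let ?S = "range (\<lambda>\<theta>. A *v \<theta>)"
  have sub: "subspace ?S"
    by (intro linear_subspace_image subspace_UNIV) (simp add: matrix_vector_mul_linear)
  hence sp: "span ?S = ?S" by (simp add: span_eq_iff)
  obtain p q where p: "p \<in> span ?S" and q: "\<And>w. w \<in> span ?S \<Longrightarrow> orthogonal q w"
    and yd: "y = p + q" using orthogonal_subspace_decomp_exists by blast
  have "q \<bullet> (A *v (transpose A *v q)) = 0" using q[of "A *v (transpose A *v q)"] sp
    by (auto simp: orthogonal_def)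
  hence "(transpose A *v q) \<bullet> (transpose A *v q) = 0"
    by (metis dot_lmul_matrix transpose_matrix_vector)
  hence tq: "transpose A *v q = 0" by simp
  from p sp obtain t where t: "p = A *v t" by auto
  have "p \<bullet> q = 0" using q[OF p] by (simp add: orthogonal_def inner_commute)
  moreover have "y \<bullet> q = 0" using assms[OF tq] .
  ultimately have "q \<bullet> q = 0" by (simp add: yd inner_add_left)
  hence "q = 0" by simp
  thus ?thesis using yd t by auto
qed

theorem proposition3:
  fixes src tgt :: "'e::finite \<Rightarrow> 'n::finite" and f :: "real^'e"
  assumes "simple_graph src tgt"
    and "connected_graph src tgt"
    and "has_cycle src tgt"
  defines "A \<equiv> incidence_matrix src tgt"
  shows "(\<exists>x::real^'e. (\<forall>e. x $ e > 0) \<and> (\<exists>\<theta>::real^'n. diag_mat f *v x = A *v \<theta>))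
     \<longleftrightarrow> (\<forall>n::real^'e. transpose A *v n = 0 \<longrightarrow>
            (f * n = 0 \<or> (\<exists>i j. (f * n) $ i > 0 \<and> (f * n) $ j < 0)))"
proof
  have dg: "diag_mat f *v x = f * x" for x
  proof -
    have "(\<Sum>j\<in>UNIV. (if i = j then f $ i else 0) * x $ j) = f $ i * x $ i" for i
    proof -
      have "(\<Sum>j\<in>UNIV. (if i = j then f $ i else 0) * x $ j) = (\<Sum>j\<in>UNIV. if i = j then f $ i * x $ j else 0)"
        by (rule sum.cong) auto
      also have "\<dots> = f $ i * x $ i" by simp
      finally show ?thesis .
    qed
    thus ?thesis by (simp add: diag_mat_def matrix_vector_mult_def vec_eq_iff)
  qed
  have swap: "(f * n) \<bullet> x = n \<bullet> (f * x)" for n x :: "real^'e"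
    by (simp add: inner_vec_def mult_ac)
  {
    assume "\<exists>x::real^'e. (\<forall>e. x $ e > 0) \<and> (\<exists>\<theta>::real^'n. diag_mat f *v x = A *v \<theta>)"
    then obtain x \<theta> where pos: "\<forall>e. x $ e > 0" and eq: "f * x = A *v \<theta>"
      by (auto simp: dg)
    show "\<forall>n::real^'e. transpose A *v n = 0 \<longrightarrow>
            (f * n = 0 \<or> (\<exists>i j. (f * n) $ i > 0 \<and> (f * n) $ j < 0))"
    proof (intro allI impI)
      fix n :: "real^'e" assume n: "transpose A *v n = 0"
      have "(f * n) \<bullet> x = 0"
        using n by (simp add: swap eq flip: dot_lmul_matrix)
      then show "f * n = 0 \<or> (\<exists>i j. (f * n) $ i > 0 \<and> (f * n) $ j < 0)"
        using easy_dir pos by blast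
    qed
  }
  assume C: "\<forall>n::real^'e. transpose A *v n = 0 \<longrightarrow>
            (f * n = 0 \<or> (\<exists>i j. (f * n) $ i > 0 \<and> (f * n) $ j < 0))"
  define D where "D = {x::real^'e. \<forall>i. 0 \<le> x $ i} \<inter> {x. 1 \<bullet> x = 1}"
  define M where "M = (\<lambda>n. f * n) ` {n::real^'e. transpose A *v n = 0}"
  have sum1: "1 \<bullet> x = (\<Sum>i\<in>UNIV. x $ i)" for x :: "real^'e"
    by (simp add: inner_vec_def)
  have cO: "convex {x::real^'e. (\<forall>i. 0 \<le> x$i)}"
    by (rule convex_box_cart) (simp add: atLeast_def[symmetric])
  have cD: "convex D" unfolding D_def
    by (intro convex_Int cO convex_hyperplane)
  have clD: "closed D" unfolding D_def
    by (intro closed_Int closed_positive_orthant closed_hyperplane)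
  have bD: "bounded D"
  proof -
    have "norm x \<le> 1" if "x \<in> D" for x
    proof -
      have "norm x \<le> (\<Sum>i\<in>UNIV. \<bar>x$i\<bar>)" by (rule norm_le_l1_cart)
      also have "\<dots> = (\<Sum>i\<in>UNIV. x$i)" using that by (simp add: D_def)
      also have "\<dots> = 1" using that by (simp add: D_def sum1)
      finally show ?thesis .
    qed
    thus ?thesis by (auto simp: bounded_iff)
  qed
  have ax: "axis i 1 \<in> D" for i :: 'e
    by (simp add: D_def sum1 axis_def)
  have neD: "D \<noteq> {}" using ax by blast
  have subM: "subspace M" unfolding M_def
  proof (rule linear_subspace_image)
    show "linear (\<lambda>n. f * n)" by (simp add: linearI vec_eq_iff algebra_simps)
    show "subspace {n::real^'e. transpose A *v n = 0}"
    proof -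
      have "subspace ((\<lambda>n. transpose A *v n) -` {0})"
        by (intro linear_subspace_vimage subspace_single_0) (rule matrix_vector_mul_linear)
      thus ?thesis by (simp add: vimage_def)
    qed
  qed
  have cM: "convex M" using subM by (rule subspace_imp_convex)
  have clM: "closed M" using subM by (rule closed_subspace)
  have disj: "D \<inter> M = {}"
  proof (rule ccontr)
    assume "D \<inter> M \<noteq> {}"
    then obtain n where n: "transpose A *v n = 0" and d: "f * n \<in> D" unfolding M_def by auto
    from d have nn: "\<forall>i. (f * n) $ i \<ge> 0" and s: "(\<Sum>i\<in>UNIV. (f*n) $ i) = 1"
      by (auto simp: D_def sum1)
    have "f * n \<noteq> 0"
    proof
      assume "f * n = 0"
      hence "(\<Sum>i\<in>UNIV. (f*n) $ i) = 0" by simp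
      thus False using s by simp
    qed
    then show False using C n nn by (meson not_less)
  qed
  obtain a b where aD: "\<forall>x\<in>D. a \<bullet> x < b" and aM: "\<forall>x\<in>M. a \<bullet> x > b"
    using separating_hyperplane_compact_closed[OF cD compact_eq_bounded_closed[THEN iffD2, OF conjI[OF bD clD]] neD cM clM disj]
    by blast
  have "0 \<in> M" using subM by (simp add: subspace_0)
  hence b0: "b < 0" using aM by fastforce
  have orthM: "a \<bullet> m = 0" if "m \<in> M" for m
  proof (rule ccontr)
    assume ne: "a \<bullet> m \<noteq> 0"
    let ?t = "(b - 1) / (a \<bullet> m)"
    have "?t *\<^sub>R m \<in> M" using subM that by (simp add: subspace_scale)
    hence "a \<bullet> (?t *\<^sub>R m) > b" using aM by blast
    moreover have "a \<bullet> (?t *\<^sub>R m) = b - 1" using ne by simp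
    ultimately show False by simp
  qed
  define x where "x = - a"
  have xpos: "\<forall>e. x $ e > 0"
  proof
    fix e
    have "a \<bullet> axis e 1 < b" using aD ax by blast
    hence "a $ e < 0" using b0 by (simp add: inner_axis)
    thus "x $ e > 0" by (simp add: x_def)
  qed
  have "\<exists>\<theta>. f * x = A *v \<theta>"
  proof (rule range_char)
    fix n :: "real^'e" assume "transpose A *v n = 0"
    hence "f * n \<in> M" by (auto simp: M_def)
    hence "a \<bullet> (f * n) = 0" by (rule orthM)
    thus "(f * x) \<bullet> n = 0"
      by (simp add: x_def inner_vec_def mult_ac sum_negf)
  qed
  thus "\<exists>x::real^'e. (\<forall>e. x $ e > 0) \<and> (\<exists>\<theta>::real^'n. diag_mat f *v x = A *v \<theta>)"
    using xpos by (auto simp: dg)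
qed

end
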